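(* Let $E/\mathbb{Q}$ be a strong Weil curve of conductor $N_E$ with notation as in the context. Let $q$ be a positive divisor of $N_E$, let $q^\alpha\| N_E$, and let $W_q=\begin{pmatrix}q^\alpha a&b\\N_Ec&q^\alpha d\end{pmatrix}$ ($a,b,c,d\in\mathbb{Z}$) be an Atkin–Lehner involution of determinant $q^\alpha$, with $F_E|_2W_q=\lambda_qF_E$, $\lambda_q\in\{\pm1\}$. Then $$\widehat{\mathfrak{Z}}_E(W_qz)=\mathfrak{Z}_E^{+}\big(\lambda_q(\mathcal{E}_E(z)-\Omega_q(F_E))\big)-\frac{\deg(\phi_E)}{4\pi\|F_E\|^2}\cdot\overline{\lambda_q(\mathcal{E}_E(z)-\Omega_q(F_E))},$$ where $\Omega_q(F_E):=-2\pi i\int_{W_q^{-1}i\infty}^{i\infty}F_E(z)\,dz$.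
   Context: $F_E=\sum a_E(n)q^n\in S_2(\Gamma_0(N_E))$ is the normalized newform of $E$, $\phi_E:X_0(N_E)\to E$ the modular parametrization, $\|F_E\|$ the Petersson norm, $\mathcal{E}_E(z)=-2\pi i\int_z^{i\infty}F_E(\tau)d\tau$, and $\Lambda_E$ the lattice with $E\cong\mathbb{C}/\Lambda_E$ (the period lattice of $F_E$). With $\zeta(\Lambda_E;\mathfrak{z})$ the Weierstrass zeta function and $S(\Lambda_E)=\lim_{s\to0^+}\sum_{w\in\Lambda_E\setminus\{0\}}w^{-2}|w|^{-2s}$, put $\mathfrak{Z}^+_E(\mathfrak{z})=\zeta(\Lambda_E;\mathfrak{z})-S(\Lambda_E)\mathfrak{z}$, $\mathfrak{Z}_E(\mathfrak{z})=\mathfrak{Z}^+_E(\mathfrak{z})-\frac{\deg(\phi_E)}{4\pi\|F_E\|^2}\overline{\mathfrak{z}}$ and $\widehat{\mathfrak{Z}}_E(z)=\mathfrak{Z}_E(\mathcal{E}_E(z))$. *)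

theory Defs
  imports "HOL-Complex_Analysis.Complex_Analysis"
begin

text \<open>Integer 2x2 matrices are encoded as quadruples (a,b,c,d) standing for
  the matrix with rows (a b) and (c d).\<close>

type_synonym imat = "int \<times> int \<times> int \<times> int"

definition uhp :: "complex set" where
  "uhp = {z. Im z > 0}"

definition mdet :: "imat \<Rightarrow> int" where
  "mdet M = (case M of (a,b,c,d) \<Rightarrow> a*d - b*c)"

definition moeb :: "imat \<Rightarrow> complex \<Rightarrow> complex" where
  "moeb M z = (case M of (a,b,c,d) \<Rightarrow> (of_int a * z + of_int b) / (of_int c * z + of_int d))"

definition slash2 :: "(complex \<Rightarrow> complex) \<Rightarrow> imat \<Rightarrow> complex \<Rightarrow> complex" where
  "slash2 F M z = (case M of (a,b,c,d) \<Rightarrow>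
      of_int (mdet M) * F (moeb M z) / (of_int c * z + of_int d)^2)"

definition SL2Z :: "imat set" where
  "SL2Z = {M. mdet M = 1}"

definition Gamma0 :: "nat \<Rightarrow> imat set" where
  "Gamma0 N = {(a,b,c,d). a*d - b*c = 1 \<and> int N dvd c}"

definition vanishing_expansion :: "(complex \<Rightarrow> complex) \<Rightarrow> bool" where
  "vanishing_expansion G \<longleftrightarrow> (\<exists>h::nat. h > 0 \<and> (\<exists>b :: nat \<Rightarrow> complex.
      \<forall>z\<in>uhp. (\<lambda>n. b n * exp (2 * pi * \<i> * of_nat n * z / of_nat h)) sums G z \<and> b 0 = 0))"

definition cusp_form2 :: "nat \<Rightarrow> (complex \<Rightarrow> complex) \<Rightarrow> bool" where
  "cusp_form2 N F \<longleftrightarrow> F holomorphic_on uhp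
     \<and> (\<forall>\<gamma>\<in>Gamma0 N. \<forall>z\<in>uhp. slash2 F \<gamma> z = F z)
     \<and> (\<forall>\<gamma>\<in>SL2Z. vanishing_expansion (slash2 F \<gamma>))"

definition has_q_expansion :: "(complex \<Rightarrow> complex) \<Rightarrow> (nat \<Rightarrow> complex) \<Rightarrow> bool" where
  "has_q_expansion F a \<longleftrightarrow> (\<forall>z\<in>uhp. (\<lambda>n. a n * exp (2 * pi * \<i> * of_nat n * z)) sums F z)"

definition int_to_inf :: "(complex \<Rightarrow> complex) \<Rightarrow> complex \<Rightarrow> complex" where
  "int_to_inf F z = Lim at_top (\<lambda>T::real. contour_integral (linepath z (z + \<i> * of_real T)) F)"

definition eichler :: "(complex \<Rightarrow> complex) \<Rightarrow> complex \<Rightarrow> complex" where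
  "eichler F z = - 2 * pi * \<i> * int_to_inf F z"

text \<open>Omega_M(F) = -2 pi i int_{M^{-1} i infinity}^{i infinity} F(z) dz.
  For M = (a,b,c,d) with c \<noteq> 0 the cusp M^{-1} i infinity is the rational
  number -d/c; the integral from it is the limit of integrals starting at
  -d/c + i eps as eps \<rightarrow> 0+.  If c = 0 the cusp is i infinity and Omega = 0.\<close>
definition Omega :: "(complex \<Rightarrow> complex) \<Rightarrow> imat \<Rightarrow> complex" where
  "Omega F M = (case M of (a,b,c,d) \<Rightarrow>
     (if c = 0 then 0
      else - 2 * pi * \<i> * Lim (at_right 0)
            (\<lambda>eps::real. int_to_inf F (complex_of_real (- of_int d / of_int c) + \<i> * of_real eps))))"

definition period_lattice :: "nat \<Rightarrow> (complex \<Rightarrow> complex) \<Rightarrow> complex set" where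
  "period_lattice N F = {Omega F \<gamma> | \<gamma>. \<gamma> \<in> Gamma0 N}"

definition weierstrass_zeta :: "complex set \<Rightarrow> complex \<Rightarrow> complex" where
  "weierstrass_zeta L z = 1 / z + infsum (\<lambda>w. 1 / (z - w) + 1 / w + z / w^2) (L - {0})"

definition lattice_S :: "complex set \<Rightarrow> complex" where
  "lattice_S L = Lim (at_right 0)
     (\<lambda>s::real. infsum (\<lambda>w. 1 / w^2 * complex_of_real (norm w powr (- 2 * s))) (L - {0}))"

definition Zplus :: "complex set \<Rightarrow> complex \<Rightarrow> complex" where
  "Zplus L w = weierstrass_zeta L w - lattice_S L * w"

text \<open>Z_E(w) = Z^+_E(w) - kappa * conj w, with kappa = deg(phi_E)/(4 pi ||F_E||^2).\<close>
definition Zfull :: "complex set \<Rightarrow> real \<Rightarrow> complex \<Rightarrow> complex" where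
  "Zfull L \<kappa> w = Zplus L w - complex_of_real \<kappa> * cnj w"

definition Zhat :: "nat \<Rightarrow> (complex \<Rightarrow> complex) \<Rightarrow> real \<Rightarrow> complex \<Rightarrow> complex" where
  "Zhat N F \<kappa> z = Zfull (period_lattice N F) \<kappa> (eichler F z)"

end

theory Submission
  imports Defs
begin


lemma exp_decay: "0 < (h::real) \<Longrightarrow> ((\<lambda>T::real. exp (-2*pi*T/h)) \<longlongrightarrow> 0) at_top"
proof -
  assume h: "0 < h"
  have "filterlim (\<lambda>T::real. -2*pi*T/h) at_bot at_top"
  proof -
    have "filterlim (\<lambda>T::real. (2*pi/h) * T) at_top at_top"
      using h by (intro filterlim_tendsto_pos_mult_at_top[OF tendsto_const]) (auto simp: filterlim_ident)
    then have "filterlim (\<lambda>T::real. - ((2*pi/h) * T)) at_bot at_top"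
      by (simp add: filterlim_uminus_at_bot)
    then show ?thesis by (simp add: field_simps)
  qed
  then show ?thesis using exp_at_bot filterlim_compose by blast
qed

lemma primitive:
  assumes h: "h > 0" and sm: "\<forall>z\<in>uhp. (\<lambda>n. b n * exp (2 * pi * \<i> * of_nat n * z / of_nat h)) sums F z"
    and b0: "b 0 = 0"
  shows "\<exists>G. (\<forall>w\<in>uhp. (G has_field_derivative F w) (at w)) \<and>
             (\<forall>x::real. ((\<lambda>T::real. G (of_real x + \<i> * of_real T)) \<longlongrightarrow> 0) at_top)"
proof -
  define qf where "qf z = exp (2 * pi * \<i> * z / of_nat h)" for z
  have qpow: "exp (2 * pi * \<i> * of_nat n * z / of_nat h) = qf z ^ n" for n z
  proof -
    have "2 * pi * \<i> * of_nat n * z / of_nat h = of_nat n * (2 * pi * \<i> * z / of_nat h)"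
      by simp
    then show ?thesis unfolding qf_def by (simp only: exp_of_nat_mult)
  qed
  have qnorm: "norm (qf z) = exp (-2*pi*Im z/h)" for z
    unfolding qf_def norm_exp_eq_Re by simp
  have sm2: "z \<in> uhp \<Longrightarrow> (\<lambda>n. b n * qf z ^ n) sums F z" for z
    using sm qpow by simp
  have absb: "summable (\<lambda>n. norm (b n * w ^ n))" if w: "norm w < 1" for w
  proof -
    define y where "y = real h * (1 - norm w) / (4*pi)"
    have y: "y > 0" using h w by (simp add: y_def)
    have "\<i> * of_real y \<in> uhp" using y by (simp add: uhp_def)
    then have s: "summable (\<lambda>n. b n * qf (\<i> * of_real y) ^ n)" using sm2 sums_summable by blast
    have "1 + (-2*pi*y/h) \<le> exp (-2*pi*y/h)" by (rule exp_ge_add_one_self)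
    moreover have "1 + (-2*pi*y/h) = (1 + norm w)/2" using h by (simp add: y_def field_simps)
    ultimately have "norm w < norm (qf (\<i> * of_real y))" using w by (simp add: qnorm)
    then show ?thesis using powser_insidea[OF s] by blast
  qed
  define c where "c n = b n * of_nat h / (2*pi*\<i> * of_nat n)" for n
  have cbound: "norm (c n * w ^ n) \<le> norm (b n * w ^ n) * (h/(2*pi))" for n w
  proof (cases n)
    case 0 then show ?thesis using h by (simp add: c_def)
  next
    case (Suc m)
    have "norm (c n * w ^ n) = norm (b n * w ^ n) * (h/(2*pi)) / n"
      by (simp add: c_def norm_mult norm_divide Suc norm_power del: of_nat_Suc)
    also have "\<dots> \<le> norm (b n * w ^ n) * (h/(2*pi)) / 1"
      using Suc h by (intro divide_left_mono) auto
    also have "\<dots> = norm (b n * w ^ n) * (h/(2*pi))" by simp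
    finally show ?thesis .
  qed
  have csum: "summable (\<lambda>n. c n * w ^ n)" if "norm w < 1" for w
    apply (rule summable_norm_cancel)
    apply (rule summable_comparison_test[OF _ summable_mult2[OF absb[OF that], of "h/(2*pi)"]])
    using cbound by (auto simp del: times_divide_eq_right)
  define P where "P w = (\<Sum>n. c n * w ^ n)" for w
  have Pder: "(P has_field_derivative (\<Sum>n. diffs c n * w ^ n)) (at w)" if "norm w < 1" for w
    unfolding P_def by (rule termdiffs_strong'[OF csum that])
  have dc: "diffs c n = b (Suc n) * of_nat h / (2*pi*\<i>)" for n
    by (simp add: diffs_def c_def del: of_nat_Suc)
  define G where "G z = P (qf z)" for z
  have "(G has_field_derivative F z) (at z)" if z: "z \<in> uhp" for z
  proof -
    let ?q = "qf z"
    have qn: "norm ?q < 1" using z h by (simp add: qnorm uhp_def)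
    have q0: "?q \<noteq> 0" by (simp add: qf_def)
    have "(\<lambda>n. b (Suc n) * ?q ^ Suc n) sums F z"
      using sm2[OF z] b0 by (subst sums_Suc_iff) simp
    then have "(\<lambda>n. b (Suc n) * ?q ^ Suc n / ?q * (of_nat h / (2*pi*\<i>))) sums (F z / ?q * (of_nat h / (2*pi*\<i>)))"
      by (intro sums_mult2 sums_divide)
    moreover have "b (Suc n) * ?q ^ Suc n / ?q * (of_nat h / (2*pi*\<i>)) = diffs c n * ?q ^ n" for n
      using q0 by (simp add: dc field_simps)
    ultimately have ds: "(\<Sum>n. diffs c n * ?q ^ n) = F z / ?q * (of_nat h / (2*pi*\<i>))"
      using sums_unique by force
    have qd: "(qf has_field_derivative ?q * (2*pi*\<i> / of_nat h)) (at z)"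
      unfolding qf_def using h by (auto intro!: derivative_eq_intros)
    have "(G has_field_derivative (F z / ?q * (of_nat h / (2*pi*\<i>))) * (?q * (2*pi*\<i> / of_nat h))) (at z)"
      unfolding G_def using DERIV_chain2[OF Pder[OF qn] qd] ds by simp
    moreover have "(F z / ?q * (of_nat h / (2*pi*\<i>))) * (?q * (2*pi*\<i> / of_nat h)) = F z"
      using q0 h by (simp add: field_simps)
    ultimately show ?thesis by simp
  qed
  moreover have "((\<lambda>T::real. G (of_real x + \<i> * of_real T)) \<longlongrightarrow> 0) at_top" for x
  proof -
    have P0: "P 0 = 0" unfolding P_def by (subst powser_zero) (simp add: c_def)
    have cont: "isCont P 0" using Pder[of 0] DERIV_isCont by simp
    have "((\<lambda>T::real. qf (of_real x + \<i> * of_real T)) \<longlongrightarrow> 0) at_top"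
      apply (subst tendsto_norm_zero_iff[symmetric])
      using exp_decay[of "real h"] h by (simp add: qnorm)
    then show ?thesis unfolding G_def using isCont_tendsto_compose[OF cont] P0 by force
  qed
  ultimately show ?thesis by blast
qed



lemma uhp_convex: "convex uhp" unfolding uhp_def using convex_halfspace_Im_gt[of 0] by simp

lemma Glim':
  assumes Glim: "\<forall>x::real. ((\<lambda>T::real. G (of_real x + \<i> * of_real T)) \<longlongrightarrow> 0) at_top"
    and f: "filterlim f at_top F"
  shows "((\<lambda>t. G (of_real x + \<i> * of_real (f t))) \<longlongrightarrow> 0) F"
  using filterlim_compose[OF Glim[rule_format, of x] f] by simp

lemma int_to_inf_G:
  assumes Gd: "\<forall>w\<in>uhp. (G has_field_derivative F w) (at w)"
    and Glim: "\<forall>x::real. ((\<lambda>T::real. G (of_real x + \<i> * of_real T)) \<longlongrightarrow> 0) at_top"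
    and w: "w \<in> uhp"
  shows "int_to_inf F w = - G w"
proof -
  have ev: "\<forall>\<^sub>F T in at_top. contour_integral (linepath w (w + \<i> * of_real T)) F = G (w + \<i> * of_real T) - G w"
    using eventually_ge_at_top[of "0::real"]
  proof eventually_elim
    case (elim T)
    have w2: "w + \<i> * of_real T \<in> uhp" using w elim by (simp add: uhp_def)
    have "path_image (linepath w (w + \<i> * of_real T)) \<subseteq> uhp"
      using closed_segment_subset[OF w w2 uhp_convex] by simp
    then have "(F has_contour_integral (G (w + \<i> * of_real T) - G w)) (linepath w (w + \<i> * of_real T))"
      using contour_integral_primitive[of uhp G F "linepath w (w + \<i> * of_real T)"] Gd
      by (simp add: has_field_derivative_at_within)
    then show ?case by (rule contour_integral_unique)
  qed
  have f: "filterlim (\<lambda>T::real. Im w + T) at_top at_top"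
    by (rule filterlim_tendsto_add_at_top[OF tendsto_const filterlim_ident])
  have "((\<lambda>T::real. G (of_real (Re w) + \<i> * of_real (Im w + T))) \<longlongrightarrow> 0) at_top"
    by (rule Glim'[OF Glim f])
  moreover have "of_real (Re w) + \<i> * of_real (Im w + T) = w + \<i> * of_real T" for T
    by (simp add: complex_eq_iff)
  ultimately have "((\<lambda>T::real. G (w + \<i> * of_real T)) \<longlongrightarrow> 0) at_top" by simp
  then have "((\<lambda>T::real. G (w + \<i> * of_real T) - G w) \<longlongrightarrow> 0 - G w) at_top"
    by (intro tendsto_diff tendsto_const)
  then have "((\<lambda>T::real. contour_integral (linepath w (w + \<i> * of_real T)) F) \<longlongrightarrow> - G w) at_top"
    using tendsto_cong[OF ev] by simp
  then show ?thesis unfolding int_to_inf_def by (intro tendsto_Lim) auto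
qed

lemma Im_moeb:
  fixes A B C D :: int
  shows "Im ((of_int A*\<tau> + of_int B)/(of_int C*\<tau> + of_int D)) = of_int (A*D-B*C) * Im \<tau> / (cmod (of_int C*\<tau> + of_int D))^2"
  unfolding Im_divide cmod_power2 by (simp add: algebra_simps power2_eq_square)



lemma key:
  fixes A B C D :: int and lam :: complex
  assumes Gd: "\<forall>w\<in>uhp. (G has_field_derivative F w) (at w)"
    and Glim: "\<forall>x::real. ((\<lambda>T::real. G (of_real x + \<i> * of_real T)) \<longlongrightarrow> 0) at_top"
    and det: "A*D - B*C > 0"
    and eig: "\<forall>w\<in>uhp. slash2 F (A,B,C,D) w = lam * F w"
    and lam2: "lam * lam = 1" and z: "z \<in> uhp"
  shows "eichler F (moeb (A,B,C,D) z) = lam * (eichler F z - Omega F (A,B,C,D))"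
proof -
  have eich: "eichler F w = 2*pi*\<i>*G w" if "w \<in> uhp" for w
    by (simp add: eichler_def int_to_inf_G[OF Gd Glim that])
  have nz: "of_int C*\<tau> + of_int D \<noteq> (0::complex)" if t: "\<tau> \<in> uhp" for \<tau>
  proof (cases "C = 0")
    case True
    then have "D \<noteq> 0" using det by auto
    then show ?thesis using True by simp
  next
    case False
    then have "Im (of_int C*\<tau> + of_int D) \<noteq> 0" using t by (simp add: uhp_def)
    then show ?thesis by (metis zero_complex.sel(2))
  qed
  have muhp: "moeb (A,B,C,D) \<tau> \<in> uhp" if t: "\<tau> \<in> uhp" for \<tau>
  proof -
    have c: "(cmod (of_int C*\<tau> + of_int D))^2 > 0" using nz[OF t] by simp
    have d: "real_of_int (A*D-B*C) > 0" using det by linarith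
    have "of_int (A*D-B*C) * Im \<tau> / (cmod (of_int C*\<tau> + of_int D))^2 > 0"
      using t c d unfolding uhp_def by (intro divide_pos_pos mult_pos_pos) auto
    then show ?thesis unfolding moeb_def uhp_def by (simp only: Im_moeb prod.case mem_Collect_eq)
  qed
  have mder: "(moeb (A,B,C,D) has_field_derivative of_int (A*D-B*C)/(of_int C*\<tau> + of_int D)^2) (at \<tau>)"
    if t: "\<tau> \<in> uhp" for \<tau>
  proof -
    have "((\<lambda>\<tau>. (of_int A*\<tau> + of_int B)/(of_int C*\<tau> + of_int D)) has_field_derivative
       ((of_int A * (of_int C*\<tau> + of_int D) - (of_int A*\<tau> + of_int B) * of_int C) / (of_int C*\<tau> + of_int D)^2)) (at \<tau>)"
      using nz[OF t] by (auto intro!: derivative_eq_intros simp: power2_eq_square)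
    moreover have "(of_int A * (of_int C*\<tau> + of_int D) - (of_int A*\<tau> + of_int B) * of_int C) = (of_int (A*D-B*C) :: complex)"
      by (simp add: algebra_simps)
    ultimately show ?thesis unfolding moeb_def[abs_def] by simp
  qed
  have Hd: "((\<lambda>\<tau>. G (moeb (A,B,C,D) \<tau>) - lam * G \<tau>) has_field_derivative 0) (at \<tau> within uhp)"
    if t: "\<tau> \<in> uhp" for \<tau>
  proof -
    have "((\<lambda>\<tau>. G (moeb (A,B,C,D) \<tau>) - lam * G \<tau>) has_field_derivative
         F (moeb (A,B,C,D) \<tau>) * (of_int (A*D-B*C)/(of_int C*\<tau> + of_int D)^2) - lam * F \<tau>) (at \<tau>)"
      using DERIV_chain2[OF Gd[rule_format, OF muhp[OF t]] mder[OF t]] Gd t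
      by (auto intro!: derivative_eq_intros)
    moreover have "F (moeb (A,B,C,D) \<tau>) * (of_int (A*D-B*C)/(of_int C*\<tau> + of_int D)^2) = lam * F \<tau>"
      using eig t unfolding slash2_def mdet_def by (auto simp: mult.commute)
    ultimately show ?thesis by (simp add: has_field_derivative_at_within)
  qed
  obtain K where K0: "\<forall>\<tau>\<in>uhp. G (moeb (A,B,C,D) \<tau>) - lam * G \<tau> = K"
    using has_field_derivative_zero_constant[OF uhp_convex Hd] by blast
  then have K: "G (moeb (A,B,C,D) \<tau>) = lam * G \<tau> + K" if "\<tau> \<in> uhp" for \<tau>
    using that by (metis diff_add_cancel add.commute)
  show ?thesis
  proof (cases "C = 0")
    case True
    have AD: "A*D > 0" using det True by simp
    then have ADr: "real_of_int A / real_of_int D > 0"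
      by (simp add: zero_less_divide_iff zero_less_mult_iff)
    have D0: "D \<noteq> 0" using AD by auto
    have meq: "moeb (A,B,C,D) (of_real 0 + \<i> * of_real T) =
        of_real (real_of_int B / real_of_int D) + \<i> * of_real (real_of_int A / real_of_int D * T)" for T
      using True D0 unfolding moeb_def
      by (simp add: divide_eq_eq complex_eq_iff algebra_simps)
    have f: "filterlim (\<lambda>T::real. real_of_int A / real_of_int D * T) at_top at_top"
      by (rule filterlim_tendsto_pos_mult_at_top[OF tendsto_const ADr filterlim_ident])
    have l1: "((\<lambda>T::real. G (moeb (A,B,C,D) (of_real 0 + \<i> * of_real T))) \<longlongrightarrow> 0) at_top"
      unfolding meq by (rule Glim'[OF Glim f])
    have l2: "((\<lambda>T::real. G (of_real 0 + \<i> * of_real T)) \<longlongrightarrow> 0) at_top"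
      using Glim by blast
    have "((\<lambda>T::real. G (moeb (A,B,C,D) (of_real 0 + \<i> * of_real T)) - lam * G (of_real 0 + \<i> * of_real T)) \<longlongrightarrow> 0 - lam * 0) at_top"
      by (intro tendsto_diff tendsto_mult l1 l2 tendsto_const)
    moreover have "\<forall>\<^sub>F T in at_top. G (moeb (A,B,C,D) (of_real 0 + \<i> * of_real T)) - lam * G (of_real 0 + \<i> * of_real T) = K"
      using eventually_gt_at_top[of "0::real"]
      by eventually_elim (rule K0[rule_format], simp add: uhp_def)
    ultimately have "((\<lambda>T::real. K) \<longlongrightarrow> 0) at_top"
      using tendsto_cong by fastforce
    then have K00: "K = 0" using tendsto_const_iff[of "at_top::real filter" K 0] by simp
    have Om: "Omega F (A,B,C,D) = 0" using True by (simp add: Omega_def)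
    show ?thesis using K[OF z] K00 Om eich[OF z] eich[OF muhp[OF z]] by simp
  next
    case False
    define s where "s = - real_of_int D / real_of_int C"
    have C2: "real_of_int C ^ 2 > 0" using False by simp
    have ep: "of_real s + \<i> * of_real \<epsilon> \<in> uhp" if "\<epsilon> > 0" for \<epsilon>
      using that by (simp add: uhp_def)
    have meq: "moeb (A,B,C,D) (of_real s + \<i> * of_real \<epsilon>) =
        of_real (real_of_int A / real_of_int C) + \<i> * of_real (real_of_int (A*D-B*C) / real_of_int C ^ 2 * inverse \<epsilon>)"
      if e: "\<epsilon> > 0" for \<epsilon>
    proof -
      have den: "of_int C * (of_real s + \<i> * of_real \<epsilon>) + of_int D = \<i> * of_real (real_of_int C * \<epsilon>)"
        using False unfolding s_def by (simp add: complex_eq_iff)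
      have den0: "\<i> * of_real (real_of_int C * \<epsilon>) \<noteq> 0" using False e by simp
      have eq: "of_int A * (of_real s + \<i> * of_real \<epsilon>) + of_int B =
        (of_real (real_of_int A / real_of_int C) + \<i> * of_real (real_of_int (A*D-B*C) / real_of_int C ^ 2 * inverse \<epsilon>))
         * (\<i> * of_real (real_of_int C * \<epsilon>))"
        using False e by (simp add: complex_eq_iff s_def field_simps power2_eq_square)
      show ?thesis unfolding moeb_def prod.case den
        using nonzero_divide_eq_eq[OF den0] eq by blast
    qed
    have pos: "real_of_int (A*D-B*C) / real_of_int C ^ 2 > 0" proof -
      have "real_of_int (A*D-B*C) > 0" using det by linarith
      then show ?thesis using C2 by (intro divide_pos_pos)
    qed
    have f: "filterlim (\<lambda>\<epsilon>::real. real_of_int (A*D-B*C) / real_of_int C ^ 2 * inverse \<epsilon>) at_top (at_right 0)"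
      by (rule filterlim_tendsto_pos_mult_at_top[OF tendsto_const pos filterlim_inverse_at_top_right])
    have l1: "((\<lambda>\<epsilon>::real. G (of_real (real_of_int A / real_of_int C) + \<i> * of_real (real_of_int (A*D-B*C) / real_of_int C ^ 2 * inverse \<epsilon>))) \<longlongrightarrow> 0) (at_right 0)"
      by (rule Glim'[OF Glim f])
    have ev: "\<forall>\<^sub>F \<epsilon> in at_right 0. lam * (K - G (of_real (real_of_int A / real_of_int C) + \<i> * of_real (real_of_int (A*D-B*C) / real_of_int C ^ 2 * inverse \<epsilon>)))
              = int_to_inf F (of_real s + \<i> * of_real \<epsilon>)"
      using eventually_at_right_less[of 0]
    proof eventually_elim
      case (elim \<epsilon>)
      have "int_to_inf F (of_real s + \<i> * of_real \<epsilon>) = - G (of_real s + \<i> * of_real \<epsilon>)"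
        by (rule int_to_inf_G[OF Gd Glim ep[OF elim]])
      moreover have "G (moeb (A,B,C,D) (of_real s + \<i> * of_real \<epsilon>)) = lam * G (of_real s + \<i> * of_real \<epsilon>) + K"
        by (rule K[OF ep[OF elim]])
      ultimately show ?case using meq[OF elim] lam2
      proof -
        have "lam * (K - (lam * G (of_real s + \<i> * of_real \<epsilon>) + K)) = - ((lam*lam) * G (of_real s + \<i> * of_real \<epsilon>))"
          by (simp add: algebra_simps)
        then show ?thesis using meq[OF elim] lam2 \<open>int_to_inf F _ = _\<close> \<open>G (moeb _ _) = _\<close> by simp
      qed
    qed
    have "((\<lambda>\<epsilon>::real. lam * (K - G (of_real (real_of_int A / real_of_int C) + \<i> * of_real (real_of_int (A*D-B*C) / real_of_int C ^ 2 * inverse \<epsilon>)))) \<longlongrightarrow> lam * (K - 0)) (at_right 0)"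
      by (intro tendsto_mult tendsto_diff l1 tendsto_const)
    then have "((\<lambda>\<epsilon>::real. int_to_inf F (of_real s + \<i> * of_real \<epsilon>)) \<longlongrightarrow> lam * K) (at_right 0)"
      using tendsto_cong[OF ev] by simp
    then have Lm: "Lim (at_right 0) (\<lambda>\<epsilon>::real. int_to_inf F (of_real s + \<i> * of_real \<epsilon>)) = lam * K"
      by (intro tendsto_Lim) auto
    have Om: "Omega F (A,B,C,D) = - 2 * pi * \<i> * (lam * K)"
      using False Lm unfolding Omega_def s_def by simp
    have "lam * (eichler F z - Omega F (A,B,C,D)) = 2*pi*\<i>*(lam * G z) + 2*pi*\<i>*((lam*lam)*K)"
      unfolding Om eich[OF z] by (simp add: algebra_simps)
    then show ?thesis using K[OF z] eich[OF muhp[OF z]] lam2 by (simp add: algebra_simps)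
  qed
qed


theorem theorem2:
  fixes N :: nat and F :: "complex \<Rightarrow> complex" and aE :: "nat \<Rightarrow> int"
    and degphi :: nat and normF :: real
    and q \<alpha> :: nat and a b c d :: int and lamq :: int and z :: complex
  assumes cusp: "cusp_form2 N F"
    and qexp: "has_q_expansion F (\<lambda>n. of_int (aE n))"
    and normalized: "aE 1 = 1"
    and normF_pos: "normF > 0"
    and q_pos: "q > 0" and q_dvd: "q dvd N"
    and exact: "q ^ \<alpha> dvd N" and exact2: "coprime (q ^ \<alpha>) (N div q ^ \<alpha>)"
    and det: "mdet (int q ^ \<alpha> * a, b, int N * c, int q ^ \<alpha> * d) = int q ^ \<alpha>"
    and lam: "lamq = 1 \<or> lamq = -1"
    and eig: "\<forall>w\<in>uhp. slash2 F (int q ^ \<alpha> * a, b, int N * c, int q ^ \<alpha> * d) w = of_int lamq * F w"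
    and z: "z \<in> uhp"
  shows "Zhat N F (real degphi / (4 * pi * normF^2))
            (moeb (int q ^ \<alpha> * a, b, int N * c, int q ^ \<alpha> * d) z)
       = Zplus (period_lattice N F)
           (of_int lamq * (eichler F z - Omega F (int q ^ \<alpha> * a, b, int N * c, int q ^ \<alpha> * d)))
         - complex_of_real (real degphi / (4 * pi * normF^2))
           * cnj (of_int lamq * (eichler F z - Omega F (int q ^ \<alpha> * a, b, int N * c, int q ^ \<alpha> * d)))"
  proof -
  have id1: "(1,0,0,1) \<in> SL2Z" by (simp add: SL2Z_def mdet_def)
  have sid: "slash2 F (1,0,0,1) = F"
    by (rule ext) (simp add: slash2_def mdet_def moeb_def)
  have "vanishing_expansion F" using cusp id1 sid unfolding cusp_form2_def by metis
  then obtain h :: nat and bb :: "nat \<Rightarrow> complex" where h: "h > 0"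
    and hb: "\<forall>z\<in>uhp. (\<lambda>n. bb n * exp (2 * pi * \<i> * of_nat n * z / of_nat h)) sums F z \<and> bb 0 = 0"
    unfolding vanishing_expansion_def by blast
  have iu: "\<i> \<in> uhp" by (simp add: uhp_def)
  have sm: "\<forall>z\<in>uhp. (\<lambda>n. bb n * exp (2 * pi * \<i> * of_nat n * z / of_nat h)) sums F z"
    using hb by blast
  have b0: "bb 0 = 0" using hb iu by blast
  obtain G where Gd: "\<forall>w\<in>uhp. (G has_field_derivative F w) (at w)"
    and Glim: "\<forall>x::real. ((\<lambda>T::real. G (of_real x + \<i> * of_real T)) \<longlongrightarrow> 0) at_top"
    using primitive[OF h sm b0] by blast
  have dpos: "(int q ^ \<alpha> * a) * (int q ^ \<alpha> * d) - b * (int N * c) > 0"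
    using det q_pos unfolding mdet_def by simp
  have lam2: "of_int lamq * of_int lamq = (1::complex)" using lam by auto
  have E: "eichler F (moeb (int q ^ \<alpha> * a, b, int N * c, int q ^ \<alpha> * d) z)
     = of_int lamq * (eichler F z - Omega F (int q ^ \<alpha> * a, b, int N * c, int q ^ \<alpha> * d))"
    by (rule key[OF Gd Glim dpos eig lam2 z])
  show ?thesis unfolding Zhat_def Zfull_def E ..
qed

end
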